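(* Let $-1<\lambda\le-1/2$. Then $C_\lambda(u_1,u_2,u_3)=\phi_\lambda^{[-1]}(\phi_\lambda(u_1)+\phi_\lambda(u_2)+\phi_\lambda(u_3))$, $u_1,u_2,u_3\in[0,1]$, is a valid three-dimensional copula.
   Context: For $\lambda\neq-1,0$, $\phi_\lambda(x)=\frac{1}{\lambda(\lambda+1)}(x^{\lambda+1}-x+\lambda(1-x))$ for $x\ge0$ (value at $0$ as a limit); for $-1<\lambda<0$, $\phi_\lambda(0)=1/(\lambda+1)$ and $\phi_\lambda$ is convex and strictly decreasing on $[0,1]$ with $\phi_\lambda(1)=0$. The pseudoinverse is $\phi_\lambda^{[-1]}(t)=\phi_\lambda^{-1}(t)$ (inverse of $\phi_\lambda|_{[0,1]}$) for $0\le t<\phi_\lambda(0)$ and $\phi_\lambda^{[-1]}(t)=0$ for $t\ge\phi_\lambda(0)$. A $d$-dimensional copula is a joint CDF on $[0,1]^d$ with uniform $[0,1]$ margins. *)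

theory Defs
  imports "HOL-Probability.Probability"
begin

text \<open>The generator phi_lambda, for lambda not in {-1,0}. For -1 < lambda the value at 0
  given by the formula (with 0 powr a = 0) coincides with the limit 1/(lambda+1).\<close>
definition phi :: "real \<Rightarrow> real \<Rightarrow> real" where
  "phi lam x = (x powr (lam + 1) - x + lam * (1 - x)) / (lam * (lam + 1))"

definition phi_pinv :: "real \<Rightarrow> real \<Rightarrow> real" where
  "phi_pinv lam t =
     (if t < phi lam 0 then (THE x. x \<in> {0..1} \<and> phi lam x = t) else 0)"

definition copula3 :: "(real \<Rightarrow> real \<Rightarrow> real \<Rightarrow> real) \<Rightarrow> bool" where
  "copula3 C \<longleftrightarrow>
     (\<exists>M :: (real \<times> real \<times> real) measure.
        prob_space M \<and> sets M = sets borel \<and>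
        (\<forall>u1\<in>{0..1}. \<forall>u2\<in>{0..1}. \<forall>u3\<in>{0..1}.
           C u1 u2 u3 = measure M ({..u1} \<times> {..u2} \<times> {..u3})) \<and>
        (\<forall>t\<in>{0..1}. measure M ({..t} \<times> UNIV \<times> UNIV) = t) \<and>
        (\<forall>t\<in>{0..1}. measure M (UNIV \<times> {..t} \<times> UNIV) = t) \<and>
        (\<forall>t\<in>{0..1}. measure M (UNIV \<times> UNIV \<times> {..t}) = t))"

end

theory Submission
  imports Defs "HOL-Real_Asymp.Real_Asymp"
begin


lemma powr_deriv_alt:
  assumes "0 < (x::real)"
  shows "((\<lambda>z. z powr a) has_real_derivative a * (x powr a / x)) (at x)"
proof -
  have "x powr (a - 1) = x powr a / x" using assms by (simp add: powr_diff)
  then show ?thesis using has_real_derivative_powr[OF assms, of a] by simp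
qed

locale G =
  fixes lam :: real
  assumes lb: "-1 < lam" and ub: "lam \<le> -1/2"
begin

lemma lam_neg: "lam < 0" using ub by simp
lemma lam1_pos: "0 < lam + 1" using lb by simp

definition c :: real where "c = 1 / (lam + 1)"

lemma c_pos: "0 < c" unfolding c_def using lam1_pos by simp

lemma phi0: "phi lam 0 = c"
proof -
  have "lam * (lam + 1) \<noteq> 0" "1 + lam \<noteq> 0" "lam \<noteq> 0" using lam_neg lam1_pos by auto
  then show ?thesis unfolding phi_def c_def by (simp add: field_simps)
qed

lemma phi1: "phi lam 1 = 0"
  unfolding phi_def by simp

definition dphi :: "real \<Rightarrow> real" where "dphi x = (x powr lam - 1) / lam"

lemma phi_deriv:
  assumes "0 < x" shows "(phi lam has_real_derivative dphi x) (at x)"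
proof -
  have "((\<lambda>x. x powr (lam+1)) has_real_derivative (lam+1) * x powr lam) (at x)"
    using has_real_derivative_powr[OF assms, of "lam+1"] by simp
  then have "((\<lambda>x. (x powr (lam + 1) - x + lam * (1 - x)) / (lam * (lam + 1))) has_real_derivative
          ((lam + 1) * x powr lam - 1 + lam * (0 - 1)) / (lam * (lam + 1))) (at x)"
    by (intro DERIV_cdivide DERIV_add DERIV_diff DERIV_cmult DERIV_ident DERIV_const)
  moreover have "((lam + 1) * x powr lam - 1 + lam * (0 - 1)) / (lam * (lam + 1)) = dphi x"
  proof -
    have "lam \<noteq> 0" "lam + 1 \<noteq> 0" using lam_neg lam1_pos by auto
    moreover have "(lam + 1) * x powr lam - 1 + lam * (0 - 1) = (lam+1) * (x powr lam - 1)"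
      by (simp add: algebra_simps)
    ultimately show ?thesis unfolding dphi_def by simp
  qed
  ultimately show ?thesis unfolding phi_def[abs_def] by simp
qed

lemma powr_gt1: "0 < x \<Longrightarrow> x < 1 \<Longrightarrow> 1 < x powr lam"
  using powr_less_mono2_neg[OF lam_neg, of x 1] by simp

lemma dphi_neg: "0 < x \<Longrightarrow> x < 1 \<Longrightarrow> dphi x < 0"
  unfolding dphi_def using powr_gt1 lam_neg by (simp add: divide_pos_neg)

lemma phi_cont: "continuous_on {0..1} (phi lam)"
proof -
  have h: "continuous_on {0..1} (\<lambda>x::real. x powr (lam + 1))"
    by (rule continuous_on_powr') (auto intro: continuous_on_id continuous_on_const simp: lam1_pos)
  show ?thesis unfolding phi_def[abs_def]
    by (intro continuous_on_divide continuous_on_diff continuous_on_add continuous_on_mult h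
        continuous_on_id continuous_on_const) (use lam_neg lam1_pos in auto)
qed

lemma phi_strict:
  assumes "0 \<le> x" "x < y" "y \<le> 1" shows "phi lam y < phi lam x"
proof (rule DERIV_neg_imp_decreasing_open[OF assms(2)])
  fix z assume "x < z" "z < y"
  then show "\<exists>d. (phi lam has_real_derivative d) (at z) \<and> d < 0"
    using assms phi_deriv dphi_neg by (intro exI[of _ "dphi z"]) auto
next
  show "continuous_on {x..y} (phi lam)" using phi_cont by (rule continuous_on_subset) (use assms in auto)
qed

lemma phi_inj: "inj_on (phi lam) {0..1}"
proof (rule inj_onI)
  fix x y assume xy: "x \<in> {0..1}" "y \<in> {0..1}" "phi lam x = phi lam y"
  show "x = y"
  proof (rule ccontr)
    assume "x \<noteq> y"
    then consider "x < y" | "y < x" by linarith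
    then show False using phi_strict[of x y] phi_strict[of y x] xy by (cases; simp)
  qed
qed

lemma phi_range: assumes "x \<in> {0..1}" shows "phi lam x \<in> {0..c}"
proof -
  have "phi lam 1 \<le> phi lam x"
    using phi_strict[of x 1] assms by (cases "x = 1") auto
  moreover have "phi lam x \<le> phi lam 0"
    using phi_strict[of 0 x] assms by (cases "x = 0") auto
  ultimately show ?thesis using phi0 phi1 by auto
qed

lemma phi_image: "phi lam ` {0..1} = {0..c}"
proof
  show "phi lam ` {0..1} \<subseteq> {0..c}" using phi_range by auto
  show "{0..c} \<subseteq> phi lam ` {0..1}"
  proof
    fix t assume "t \<in> {0..c}"
    then obtain x where "0 \<le> x" "x \<le> 1" "phi lam x = t"
      using IVT2'[of "phi lam" 1 t 0] phi0 phi1 phi_cont by auto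
    then show "t \<in> phi lam ` {0..1}" by auto
  qed
qed

definition psi :: "real \<Rightarrow> real" where "psi t = phi_pinv lam t"

lemma psi_inv: assumes "0 \<le> t" "t < c" shows "psi t \<in> {0..1} \<and> phi lam (psi t) = t"
proof -
  have "t \<in> phi lam ` {0..1}" using phi_image assms by simp
  then obtain x where x: "x \<in> {0..1}" "phi lam x = t" by blast
  have "(THE x. x \<in> {0..1} \<and> phi lam x = t) = x"
    using x phi_inj by (intro the_equality) (auto dest: inj_onD)
  then show ?thesis unfolding psi_def phi_pinv_def using assms x phi0 by simp
qed

lemma psi_ge: "c \<le> t \<Longrightarrow> psi t = 0"
  unfolding psi_def phi_pinv_def using phi0 by simp

lemma psi_phi: assumes "x \<in> {0..1}" shows "psi (phi lam x) = x"
proof (cases "x = 0")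
  case True then show ?thesis using psi_ge phi0 by simp
next
  case False
  then have "phi lam x < c" using phi_strict[of 0 x] assms phi0 by auto
  moreover have "0 \<le> phi lam x" using phi_range assms by auto
  ultimately have "psi (phi lam x) \<in> {0..1}" "phi lam (psi (phi lam x)) = phi lam x"
    using psi_inv by auto
  then show ?thesis using phi_inj assms by (auto dest: inj_onD)
qed

lemma psi_0: "psi 0 = 1" using psi_phi[of 1] phi1 by simp

lemma psi_range: "0 \<le> t \<Longrightarrow> psi t \<in> {0..1}"
  using psi_inv psi_ge by (cases "t < c") auto

lemma psi_le_iff: assumes "0 \<le> t" "u \<in> {0..1}" shows "psi t \<le> u \<longleftrightarrow> phi lam u \<le> t"
proof (cases "t < c")
  case False then show ?thesis using psi_ge phi_range[OF assms(2)] assms by auto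
next
  case True
  then have p: "psi t \<in> {0..1}" "phi lam (psi t) = t" using psi_inv assms by auto
  show ?thesis
  proof
    assume "psi t \<le> u"
    then show "phi lam u \<le> t" using phi_strict[of "psi t" u] p assms by (cases "psi t = u") auto
  next
    assume "phi lam u \<le> t"
    show "psi t \<le> u"
    proof (rule ccontr)
      assume "\<not> psi t \<le> u"
      then have "phi lam (psi t) < phi lam u" using phi_strict[of u "psi t"] p assms by auto
      then show False using p \<open>phi lam u \<le> t\<close> by simp
    qed
  qed
qed

lemma psi_cont: "continuous_on {0..c} psi"
proof -
  have "continuous_on (phi lam ` {0..1}) psi"
    by (rule continuous_on_inv[OF phi_cont compact_Icc]) (use psi_phi in blast)
  then show ?thesis using phi_image by simp
qed

lemma psi_pos: assumes "0 \<le> t" "t < c" shows "0 < psi t"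
proof -
  have "psi t \<noteq> 0" using psi_inv[OF assms] phi0 assms by auto
  moreover have "0 \<le> psi t" using psi_range assms by simp
  ultimately show ?thesis by simp
qed

lemma psi_lt1: assumes "0 < t" "t < c" shows "psi t < 1"
proof -
  have "psi t \<in> {0..1}" "phi lam (psi t) = t" using psi_inv[of t] assms by auto
  moreover have "psi t \<noteq> 1" using calculation phi1 assms by auto
  ultimately show ?thesis by auto
qed

definition psi0 :: "real \<Rightarrow> real" where "psi0 t = psi (max 0 t)"

lemma psi0_antimono: "s \<le> t \<Longrightarrow> psi0 t \<le> psi0 s"
proof -
  assume st: "s \<le> t"
  have r: "psi0 s \<in> {0..1}" unfolding psi0_def using psi_range by simp
  have "phi lam (psi0 s) \<le> max 0 s"
  proof (cases "max 0 s < c")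
    case True then show ?thesis using psi_inv[of "max 0 s"] unfolding psi0_def by simp
  next
    case False
    then have "c \<le> max 0 s" by linarith
    then have "psi (max 0 s) = 0" by (rule psi_ge)
    then show ?thesis using phi0 \<open>c \<le> max 0 s\<close> unfolding psi0_def by simp
  qed
  moreover have "psi (max 0 t) \<le> psi (max 0 s) \<longleftrightarrow> phi lam (psi (max 0 s)) \<le> max 0 t"
    by (rule psi_le_iff) (use r in \<open>auto simp: psi0_def\<close>)
  moreover have "max 0 s \<le> max 0 t" using st by simp
  ultimately show ?thesis unfolding psi0_def by linarith
qed

lemma psi0_meas: "psi0 \<in> borel_measurable borel"
proof -
  have "mono (\<lambda>t. psi0 (- t))" unfolding mono_def using psi0_antimono by simp
  then have "(\<lambda>t. psi0 (- t)) \<in> borel_measurable borel" by (rule borel_measurable_mono)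
  then have "(\<lambda>t. psi0 (- (- t))) \<in> borel_measurable borel" by measurable
  then show ?thesis by simp
qed

end

context G begin

definition D1 :: "real \<Rightarrow> real" where "D1 x = (if 0 < x then lam / (x powr lam - 1) else 0)"
definition k :: "real \<Rightarrow> real" where "k x = - (lam ^ 3) * (x powr lam / x) / (x powr lam - 1)^3"
definition kd :: "real \<Rightarrow> real" where
  "kd x = - (lam ^ 3) * (x powr lam) * ((lam - 1) * (x powr lam - 1) - 3 * lam * x powr lam) / (x^2 * (x powr lam - 1)^4)"

lemma psi_isCont: "0 < t \<Longrightarrow> t < c \<Longrightarrow> isCont psi t"
  using continuous_on_interior[OF psi_cont, of t] by simp

lemma psi_in: "0 < t \<Longrightarrow> t < c \<Longrightarrow> psi t \<in> {0<..<1}"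
  using psi_pos[of t] psi_lt1[of t] by simp

lemma psi_deriv: assumes "0 < t" "t < c" shows "(psi has_real_derivative D1 (psi t)) (at t)"
proof -
  have p: "0 < psi t" "psi t < 1" using psi_in assms by auto
  have "(psi has_real_derivative inverse (dphi (psi t))) (at t)"
  proof (rule DERIV_inverse_function[where a=0 and b=c])
    show "(phi lam has_real_derivative dphi (psi t)) (at (psi t))" using phi_deriv p by simp
    show "dphi (psi t) \<noteq> 0" using dphi_neg p by force
    show "0 < t" "t < c" using assms by auto
    show "\<And>y. 0 < y \<Longrightarrow> y < c \<Longrightarrow> phi lam (psi y) = y" using psi_inv by simp
    show "isCont psi t" using psi_isCont assms by simp
  qed
  moreover have "inverse (dphi (psi t)) = D1 (psi t)" unfolding dphi_def D1_def using p by simp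
  ultimately show ?thesis by simp
qed

lemma powr_m1: "0 < x \<Longrightarrow> x powr (a - 1) = x powr a / (x::real)"
  by (simp add: powr_diff)

lemma D1_deriv: assumes "0 < x" "x < 1"
  shows "(D1 has_real_derivative - lam * (lam * (x powr lam / x)) / (x powr lam - 1)^2) (at x)"
proof -
  have ev: "\<forall>\<^sub>F y in nhds x. lam / (y powr lam - 1) = D1 y"
    using eventually_nhds_in_open[of "{0<..}" x] assms unfolding D1_def
    by (auto elim!: eventually_mono)
  have ne: "x powr lam \<noteq> 1" using powr_gt1 assms by force
  have "((\<lambda>y. lam / (y powr lam - 1)) has_real_derivative - lam * (lam * (x powr lam / x)) / (x powr lam - 1)^2) (at x)"
    using ne assms by (auto intro!: derivative_eq_intros simp: power2_eq_square powr_m1)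
  then show ?thesis using DERIV_cong_ev[OF refl ev refl] by simp
qed

lemma D1_psi_deriv: assumes "0 < t" "t < c"
  shows "((\<lambda>t. D1 (psi t)) has_real_derivative k (psi t)) (at t)"
proof -
  have p: "0 < psi t" "psi t < 1" using psi_in assms by auto
  have ne: "psi t powr lam - 1 \<noteq> 0" using powr_gt1 p by force
  have "((\<lambda>t. D1 (psi t)) has_real_derivative
     (- lam * (lam * (psi t powr lam / psi t)) / (psi t powr lam - 1)^2) * D1 (psi t)) (at t)"
    by (rule DERIV_chain2[OF D1_deriv[OF p] psi_deriv[OF assms]])
  moreover have "(- lam * (lam * (psi t powr lam / psi t)) / (psi t powr lam - 1)^2) * D1 (psi t) = k (psi t)"
    unfolding D1_def k_def using p ne by (simp add: field_simps power3_eq_cube power2_eq_square)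
  ultimately show ?thesis by simp
qed

lemma alg_a1: fixes p x l :: real assumes "x \<noteq> 0" "p - 1 \<noteq> 0" shows
 "(l ^ 3 * p * (3 * (l * p * ((p - 1) * (p - 1)))) / (x * x) - (l * p - p) * l ^ 3 * (p - 1) ^ 3 / (x * x)) / (p - 1) ^ 6 =
   - (l ^ 3 * ((l * p / (x * x) - p / (x * x)) * (p - 1) ^ 3 - p * (3 * ((p - 1) * (p - 1)) * (l * p)) / (x * x)) / (p - 1) ^ 6)"
  using assms by (simp add: field_simps)

lemma alg_a4: fixes p x l :: real assumes "x \<noteq> 0" "p - 1 \<noteq> 0" shows
 "- (l ^ 3) * ((l * (p / x) / x - p / x / x) * (p - 1)^3
        - (p / x) * (3 * (p - 1)^2 * (l * (p / x)))) / ((p - 1)^3)^2 =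
  - (l ^ 3) * p * ((l - 1) * (p - 1) - 3 * l * p) / (x^2 * (p - 1)^4)"
  using assms by (simp add: field_simps) algebra

lemma k_deriv: assumes "0 < x" "x < 1" shows "(k has_real_derivative kd x) (at x)"
proof -
  have ne: "x powr lam - 1 \<noteq> 0" using powr_gt1 assms by force
  have "(k has_real_derivative
     - (lam ^ 3) * ((lam * (x powr lam / x) / x - x powr lam / x / x) * (x powr lam - 1)^3
        - (x powr lam / x) * (3 * (x powr lam - 1)^2 * (lam * (x powr lam / x)))) / ((x powr lam - 1)^3)^2) (at x)"
    unfolding k_def[abs_def] using ne assms
    apply (intro derivative_eq_intros refl powr_deriv_alt)
    apply (auto simp: power2_eq_square powr_m1)
    using alg_a1[of x "x powr lam" lam] ne assms apply simp
    done
  moreover have "- (lam ^ 3) * ((lam * (x powr lam / x) / x - x powr lam / x / x) * (x powr lam - 1)^3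
        - (x powr lam / x) * (3 * (x powr lam - 1)^2 * (lam * (x powr lam / x)))) / ((x powr lam - 1)^3)^2 = kd x"
    unfolding kd_def using alg_a4[of x "x powr lam" lam] ne assms by simp
  ultimately show ?thesis by simp
qed

lemma lam3_neg: "lam ^ 3 < 0"
proof -
  have "0 < lam * lam" using lam_neg by (simp add: mult_neg_neg)
  then have "lam * lam * lam < 0" using mult_pos_neg lam_neg by blast
  then show ?thesis by (simp add: power3_eq_cube)
qed

lemma kd_nonneg: assumes "0 < x" "x < 1" shows "0 \<le> kd x"
proof -
  have P: "1 < x powr lam" using powr_gt1 assms by simp
  have "(lam - 1) * (x powr lam - 1) - 3 * lam * x powr lam = x powr lam * (-2 * lam - 1) + (1 - lam)"
    by (simp add: algebra_simps)
  also have "\<dots> \<ge> 0" using ub lam_neg P by (intro add_nonneg_nonneg mult_nonneg_nonneg) auto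
  finally have a: "0 \<le> (lam - 1) * (x powr lam - 1) - 3 * lam * x powr lam" .
  have b: "0 \<le> - (lam ^ 3)" using lam3_neg by simp
  have d: "0 < x^2 * (x powr lam - 1)^4" using assms P by (intro mult_pos_pos) auto
  show ?thesis unfolding kd_def using a b P d
    by (intro divide_nonneg_pos mult_nonneg_nonneg) auto
qed

lemma k_psi_deriv: assumes "0 < t" "t < c"
  shows "((\<lambda>t. k (psi t)) has_real_derivative kd (psi t) * D1 (psi t)) (at t)"
proof -
  have p: "0 < psi t" "psi t < 1" using psi_in assms by auto
  show ?thesis by (rule DERIV_chain2[OF k_deriv[OF p] psi_deriv[OF assms]])
qed

lemma D1_neg: "0 < x \<Longrightarrow> x < 1 \<Longrightarrow> D1 x < 0"
  unfolding D1_def using powr_gt1 lam_neg by (simp add: divide_neg_pos)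

lemma k_pos: assumes "0 < x" "x < 1" shows "0 < k x"
proof -
  have P: "1 < x powr lam" using powr_gt1 assms by simp
  have b: "0 < - (lam ^ 3)" using lam3_neg by simp
  show ?thesis unfolding k_def using P b assms by (intro divide_pos_pos mult_pos_pos) auto
qed

end

context G begin

definition Fo :: "real \<Rightarrow> real" where
  "Fo r = 1 - psi r + r * D1 (psi r) - r^2 * k (psi r) / 2"

definition F :: "real \<Rightarrow> real" where
  "F r = (if r \<le> 0 then 0 else if r < c then Fo r else 1)"

lemma Fo_deriv: assumes "0 < t" "t < c"
  shows "(Fo has_real_derivative - (t^2 / 2) * kd (psi t) * D1 (psi t)) (at t)"
proof -
  have a: "((\<lambda>x. x * D1 (psi x)) has_real_derivative 1 * D1 (psi t) + t * k (psi t)) (at t)"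
    using DERIV_mult'[OF DERIV_ident D1_psi_deriv[OF assms]] by (simp add: algebra_simps)
  have b0: "((\<lambda>x. x^2) has_real_derivative 2 * t) (at t)"
    using DERIV_power[OF DERIV_ident, of 2 t] by simp
  have b: "((\<lambda>x. x^2 * k (psi x)) has_real_derivative 2 * t * k (psi t) + t^2 * (kd (psi t) * D1 (psi t))) (at t)"
    using DERIV_mult'[OF b0 k_psi_deriv[OF assms]] by (simp add: algebra_simps)
  have "(Fo has_real_derivative
     (0 - D1 (psi t) + (1 * D1 (psi t) + t * k (psi t)) - (2 * t * k (psi t) + t^2 * (kd (psi t) * D1 (psi t))) / 2)) (at t)"
    unfolding Fo_def[abs_def]
    by (intro DERIV_diff DERIV_add DERIV_const psi_deriv[OF assms] a DERIV_cdivide b)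
  moreover have "(0 - D1 (psi t) + (1 * D1 (psi t) + t * k (psi t)) - (2 * t * k (psi t) + t^2 * (kd (psi t) * D1 (psi t))) / 2)
     = - (t^2 / 2) * kd (psi t) * D1 (psi t)" by (simp add: field_simps)
  ultimately show ?thesis by simp
qed

lemma Fo_le1: assumes "0 < t" "t < c" shows "Fo t \<le> 1"
proof -
  have p: "0 < psi t" "psi t < 1" using psi_in assms by auto
  have "t * D1 (psi t) \<le> 0" using D1_neg[OF p] assms by (simp add: mult_nonneg_nonpos)
  moreover have "0 \<le> t^2 * k (psi t) / 2" using k_pos[OF p] by simp
  ultimately show ?thesis unfolding Fo_def using p by simp
qed

lemma psi_at_right0: "filterlim psi (at_left 1) (at_right 0)"
proof (rule tendsto_imp_filterlim_at_left)
  have "(psi \<longlongrightarrow> psi 0) (at 0 within {0..c})"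
    using psi_cont c_pos unfolding continuous_on_def by auto
  then have "(psi \<longlongrightarrow> 1) (at 0 within {0..c})" using psi_0 by simp
  moreover have "at_right 0 \<le> at 0 within {0..c}"
    using at_within_Icc_at_right[OF c_pos] by simp
  ultimately show "(psi \<longlongrightarrow> 1) (at_right 0)" by (rule tendsto_mono[rotated])
  show "\<forall>\<^sub>F x in at_right 0. psi x < 1"
    using eventually_at_right_real[OF c_pos] by eventually_elim (use psi_lt1 in auto)
qed

lemma Fo_lim0: "(Fo \<longlongrightarrow> 0) (at_right 0)"
proof -
  define G where "G x = 1 - x + ((x powr (lam + 1) - x + lam * (1 - x)) / (lam * (lam + 1))) * (lam / (x powr lam - 1))
     - ((x powr (lam + 1) - x + lam * (1 - x)) / (lam * (lam + 1)))^2 * (- (lam ^ 3) * (x powr lam / x) / (x powr lam - 1)^3) / 2" for x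
  have "(G \<longlongrightarrow> 0) (at_left 1)"
    unfolding G_def using lam_neg lb by real_asymp
  then have "((\<lambda>t. G (psi t)) \<longlongrightarrow> 0) (at_right 0)"
    by (rule filterlim_compose[OF _ psi_at_right0])
  moreover have "\<forall>\<^sub>F t in at_right 0. G (psi t) = Fo t"
    using eventually_at_right_real[OF c_pos]
  proof eventually_elim
    case (elim t)
    then have p: "0 < psi t" "psi t < 1" "phi lam (psi t) = t" using psi_in psi_inv by auto
    show ?case unfolding G_def Fo_def D1_def k_def using p(1,2) p(3)[unfolded phi_def] by simp
  qed
  ultimately show ?thesis by (rule Lim_transform_eventually)
qed

end

context G begin

lemma Fo_isCont: "0 < t \<Longrightarrow> t < c \<Longrightarrow> isCont Fo t"
  using Fo_deriv DERIV_isCont by blast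

lemma Fo_mono: assumes "0 < s" "s \<le> t" "t < c" shows "Fo s \<le> Fo t"
proof (rule DERIV_nonneg_imp_increasing_open[OF assms(2)])
  fix x assume x: "s < x" "x < t"
  then have p: "0 < psi x" "psi x < 1" using psi_in assms by auto
  have "kd (psi x) * D1 (psi x) \<le> 0"
    using kd_nonneg[OF p] D1_neg[OF p] by (simp add: mult_nonneg_nonpos)
  then have "0 \<le> - (x^2 / 2) * kd (psi x) * D1 (psi x)"
    by (simp add: mult_nonneg_nonpos mult.assoc)
  then show "\<exists>y. (Fo has_real_derivative y) (at x) \<and> 0 \<le> y"
    using Fo_deriv[of x] x assms by auto
next
  show "continuous_on {s..t} Fo"
    using Fo_isCont assms by (intro continuous_at_imp_continuous_on) auto
qed

lemma Fo_nonneg: assumes "0 < t" "t < c" shows "0 \<le> Fo t"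
proof (rule tendsto_upperbound[OF Fo_lim0])
  show "\<forall>\<^sub>F i in at_right 0. Fo i \<le> Fo t"
    using eventually_at_right_real[OF assms(1)] by eventually_elim (use Fo_mono assms in auto)
qed simp

lemma F_mono: "x \<le> y \<Longrightarrow> F x \<le> F y"
  unfolding F_def using Fo_mono Fo_nonneg Fo_le1 by auto

lemma F_range: "0 \<le> F x" "F x \<le> 1"
  unfolding F_def using Fo_nonneg Fo_le1 by auto

lemma F_rcont: "continuous (at_right a) F"
proof -
  consider "a < 0" | "a = 0" | "0 < a" "a < c" | "c \<le> a" by linarith
  then show ?thesis
  proof cases
    case 1
    have "\<forall>\<^sub>F x in at_right a. 0 = F x"
      using eventually_at_right_real[OF 1] by eventually_elim (auto simp: F_def)
    then have "(F \<longlongrightarrow> 0) (at_right a)" by (rule Lim_transform_eventually[OF tendsto_const])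
    then show ?thesis unfolding continuous_within using 1 by (simp add: F_def)
  next
    case 2
    have "\<forall>\<^sub>F x in at_right 0. Fo x = F x"
      using eventually_at_right_real[OF c_pos] by eventually_elim (auto simp: F_def)
    then have "(F \<longlongrightarrow> 0) (at_right 0)" by (rule Lim_transform_eventually[OF Fo_lim0])
    then show ?thesis unfolding continuous_within using 2 by (simp add: F_def)
  next
    case 3
    have ev: "\<forall>\<^sub>F x in nhds a. Fo x = F x"
      using eventually_nhds_in_open[of "{0<..<c}" a] 3 by (auto simp: F_def elim!: eventually_mono)
    have "isCont F a"
      using Fo_isCont[OF 3] isCont_cong[OF ev] by simp
    then show ?thesis by (rule continuous_at_imp_continuous_at_within)
  next
    case 4
    have "\<forall>\<^sub>F x in at_right a. 1 = F x"
      using eventually_at_right_real[of a "a+1"] 4 c_pos by (auto simp: F_def elim!: eventually_mono)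
    then have "(F \<longlongrightarrow> 1) (at_right a)" by (rule Lim_transform_eventually[OF tendsto_const])
    then show ?thesis unfolding continuous_within using 4 c_pos by (simp add: F_def)
  qed
qed

definition rho :: "real measure" where "rho = interval_measure F"

lemma sets_rho[simp, measurable_cong]: "sets rho = sets borel"
  unfolding rho_def by simp

lemma space_rho[simp]: "space rho = UNIV"
  unfolding rho_def by simp

lemma rho_Ioc: "a \<le> b \<Longrightarrow> emeasure rho {a<..b} = ennreal (F b - F a)"
  unfolding rho_def using F_mono F_rcont by (intro emeasure_interval_measure_Ioc) auto

lemma rho_le0: "emeasure rho {..0} = 0"
proof -
  have "{..0::real} = (\<Union>n::nat. {- real n <.. 0})"
  proof (intro set_eqI iffI)
    fix x :: real assume "x \<in> {..0}"
    obtain n :: nat where "- x < real n" using reals_Archimedean2 by blast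
    then show "x \<in> (\<Union>n::nat. {- real n <.. 0})" using \<open>x \<in> {..0}\<close>
      by (intro UN_I[of n]) auto
  qed auto
  moreover have "emeasure rho (\<Union>n::nat. {- real n <.. 0}) = 0"
    by (rule emeasure_UN_eq_0) (auto simp: rho_Ioc F_def)
  ultimately show ?thesis by simp
qed

lemma rho_gtc: "emeasure rho {c<..} = 0"
proof -
  have "{c<..} = (\<Union>n::nat. {c <.. c + real n})"
  proof (intro set_eqI iffI)
    fix x :: real assume "x \<in> {c<..}"
    obtain n :: nat where "x - c < real n" using reals_Archimedean2 by blast
    then show "x \<in> (\<Union>n::nat. {c <.. c + real n})" using \<open>x \<in> {c<..}\<close>
      by (intro UN_I[of n]) auto
  qed auto
  moreover have "emeasure rho (\<Union>n::nat. {c <.. c + real n}) = 0"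
    by (rule emeasure_UN_eq_0) (use c_pos in \<open>auto simp: rho_Ioc F_def\<close>)
  ultimately show ?thesis by simp
qed

lemma rho_gt: assumes "0 \<le> y" "y \<le> c" shows "emeasure rho {y<..} = ennreal (1 - F y)"
proof -
  have "{y<..} = {y<..c} \<union> {c<..}" using assms by auto
  moreover have "{c<..} \<in> null_sets rho" using rho_gtc by (simp add: null_sets_def)
  ultimately have "emeasure rho {y<..} = emeasure rho {y<..c}"
    by (simp add: emeasure_Un_null_set)
  also have "\<dots> = ennreal (1 - F y)" using rho_Ioc[OF assms(2)] c_pos by (simp add: F_def)
  finally show ?thesis .
qed

lemma rho_gt_ge_c: assumes "c \<le> y" shows "emeasure rho {y<..} = 0"
proof -
  have "emeasure rho {y<..} \<le> emeasure rho {c<..}" using assms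
    by (intro emeasure_mono) auto
  then show ?thesis using rho_gtc by simp
qed

lemma prob_rho: "prob_space rho"
proof
  have "emeasure rho (space rho) \<le> emeasure rho {..0} + emeasure rho {0<..}"
  proof -
    have "space rho = {..0} \<union> {0<..}" by auto
    then show ?thesis using emeasure_subadditive[of "{..0}" rho "{0<..}"] by simp
  qed
  also have "\<dots> = 1" using rho_gt[of 0] c_pos by (simp add: rho_le0 F_def)
  finally have "emeasure rho (space rho) \<le> 1" .
  moreover have "emeasure rho {0<..} \<le> emeasure rho (space rho)" by (intro emeasure_mono) auto
  ultimately show "emeasure rho (space rho) = 1" using rho_gt[of 0] c_pos by (simp add: F_def)
qed

end

context G begin

definition gg :: "real \<Rightarrow> real \<Rightarrow> real" where
  "gg s r = (if s \<le> r then (1 - s / r)^2 else 0)"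
definition gd :: "real \<Rightarrow> real \<Rightarrow> real" where
  "gd s y = 2 * s * (y - s) / y^3"
definition HH :: "real \<Rightarrow> real \<Rightarrow> real" where
  "HH s y = (s^2 / y^2 - 2 * s / y) * psi y + s * (y - s) / y * D1 (psi y)"

lemma gd_nonneg: "0 < s \<Longrightarrow> s \<le> y \<Longrightarrow> 0 \<le> gd s y"
  unfolding gd_def by simp

lemma gg_integral: assumes s: "0 < s"
  shows "ennreal (gg s r) = (\<integral>\<^sup>+ y. ennreal (gd s y) * indicator {s..<r} y \<partial>lborel)"
proof (cases "s < r")
  case False
  then have "gg s r = 0" unfolding gg_def using s by auto
  moreover have "{s..<r} = {}" using False by auto
  ultimately show ?thesis by simp
next
  case True
  have "((gd s) has_integral ((1 - s / r)^2 - (1 - s / s)^2)) {s..r}"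
  proof (rule fundamental_theorem_of_calculus)
    show "s \<le> r" using True by simp
    fix x assume x: "x \<in> {s..r}"
    then have "0 < x" using s by auto
    have "((\<lambda>y. (1 - s / y)^2) has_real_derivative gd s x) (at x)"
      using \<open>0 < x\<close> unfolding gd_def
      by (auto intro!: derivative_eq_intros simp: field_simps power2_eq_square power3_eq_cube)
    then show "((\<lambda>y. (1 - s / y)^2) has_vector_derivative gd s x) (at x within {s..r})"
      by (simp add: has_real_derivative_iff_has_vector_derivative[symmetric] has_field_derivative_at_within)
  qed
  then have "((gd s) has_integral gg s r) {s..r}" using s True unfolding gg_def by simp
  then have "(\<integral>\<^sup>+ y. ennreal (gd s y) * indicator {s..r} y \<partial>lborel) = ennreal (gg s r)"
    by (intro nn_integral_has_integral_lebesgue') (use s gd_nonneg in auto)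
  moreover have "(\<integral>\<^sup>+ y. ennreal (gd s y) * indicator {s..r} y \<partial>lborel)
      = (\<integral>\<^sup>+ y. ennreal (gd s y) * indicator {s..<r} y \<partial>lborel)"
    by (intro nn_integral_cong_AE) (use AE_lborel_singleton[of r] in \<open>auto elim!: eventually_mono split: split_indicator\<close>)
  ultimately show ?thesis by simp
qed

lemma psi_at_leftc: "filterlim psi (at_right 0) (at_left c)"
proof (rule tendsto_imp_filterlim_at_right)
  have "(psi \<longlongrightarrow> psi c) (at c within {0..c})"
    using psi_cont c_pos unfolding continuous_on_def by auto
  then show "(psi \<longlongrightarrow> 0) (at_left c)" using psi_ge[of c] at_within_Icc_at_left[OF c_pos] by simp
  show "\<forall>\<^sub>F x in at_left c. 0 < psi x"
    using eventually_at_left_real[OF c_pos] by eventually_elim (use psi_pos in auto)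
qed

lemma D1_psi_lim: "((\<lambda>y. D1 (psi y)) \<longlongrightarrow> 0) (at_left c)"
proof -
  have "((\<lambda>x. lam / (x powr lam - 1)) \<longlongrightarrow> 0) (at_right 0)" using lam_neg by real_asymp
  moreover have "\<forall>\<^sub>F x in at_right 0. lam / (x powr lam - 1) = D1 x"
    using eventually_at_right_less[of "0::real"] by eventually_elim (simp add: D1_def)
  ultimately have "(D1 \<longlongrightarrow> 0) (at_right 0)" by (rule Lim_transform_eventually)
  then show ?thesis by (rule filterlim_compose[OF _ psi_at_leftc])
qed

lemma HH_deriv: assumes "0 < s" "s < y" "y < c"
  shows "(HH s has_real_derivative gd s y * (1 - Fo y)) (at y)"
proof -
  have y: "0 < y" "y < c" using assms by auto
  have a: "((\<lambda>y. s^2 / y^2 - 2 * s / y) has_real_derivative (- 2 * s^2 / y^3 + 2 * s / y^2)) (at y)"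
    using y by (auto intro!: derivative_eq_intros simp: field_simps power2_eq_square power3_eq_cube)
  have b: "((\<lambda>y. s * (y - s) / y) has_real_derivative s^2 / y^2) (at y)"
    using y by (auto intro!: derivative_eq_intros simp: field_simps power2_eq_square power3_eq_cube)
  have "(HH s has_real_derivative
      ((s^2 / y^2 - 2 * s / y) * D1 (psi y) + (- 2 * s^2 / y^3 + 2 * s / y^2) * psi y)
      + (s * (y - s) / y * k (psi y) + s^2 / y^2 * D1 (psi y))) (at y)"
    unfolding HH_def[abs_def]
    by (intro DERIV_add DERIV_mult' a b psi_deriv[OF y] D1_psi_deriv[OF y])
  moreover have "((s^2 / y^2 - 2 * s / y) * D1 (psi y) + (- 2 * s^2 / y^3 + 2 * s / y^2) * psi y)
      + (s * (y - s) / y * k (psi y) + s^2 / y^2 * D1 (psi y)) = gd s y * (1 - Fo y)"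
    unfolding gd_def Fo_def using y by (simp add: field_simps power2_eq_square power3_eq_cube)
  ultimately show ?thesis by simp
qed

lemma HH_cont: assumes "0 < s" "s < c" shows "continuous_on {s..c} (HH s)"
proof -
  have "continuous (at y within {s..c}) (HH s)" if y: "y \<in> {s..c}" for y
  proof (cases "y = c")
    case False
    then have "s < y \<or> s = y" "y < c" using y by auto
    then have "isCont (HH s) y"
    proof -
      have yy: "0 < y" "y < c" using y False assms by auto
      have "isCont psi y" "isCont (\<lambda>t. D1 (psi t)) y"
        using psi_deriv[OF yy] D1_psi_deriv[OF yy] DERIV_isCont by blast+
      then show ?thesis unfolding HH_def[abs_def] using yy
        by (intro continuous_intros) auto
    qed
    then show ?thesis by (rule continuous_at_imp_continuous_at_within)
  next
    case True
    have "((\<lambda>y. (s^2 / y^2 - 2 * s / y) * psi y + s * (y - s) / y * D1 (psi y)) \<longlongrightarrow>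
          (s^2 / c^2 - 2 * s / c) * 0 + s * (c - s) / c * 0) (at_left c)"
      using c_pos psi_at_leftc D1_psi_lim unfolding filterlim_at
      by (intro tendsto_intros) (auto simp: filterlim_at)
    moreover have "HH s c = 0" unfolding HH_def using psi_ge[of c] by (simp add: D1_def)
    ultimately have "(HH s \<longlongrightarrow> HH s c) (at c within {s..c})"
      using at_within_Icc_at_left[of s c] assms unfolding HH_def[abs_def] by simp
    then show ?thesis using True by (simp add: continuous_within)
  qed
  then show ?thesis by (simp add: continuous_on_eq_continuous_within)
qed

lemma HH_integral: assumes "0 < s" "s < c"
  shows "(\<integral>\<^sup>+ y. ennreal (gd s y * (1 - F y)) * indicator {s..c} y \<partial>lborel) = ennreal (psi s)"
proof -
  have "((\<lambda>y. gd s y * (1 - F y)) has_integral (HH s c - HH s s)) {s..c}"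
  proof (rule fundamental_theorem_of_calculus_interior)
    show "s \<le> c" using assms by simp
    show "continuous_on {s..c} (HH s)" by (rule HH_cont[OF assms])
    fix x assume x: "x \<in> {s<..<c}"
    then have "F x = Fo x" using assms unfolding F_def by auto
    then show "(HH s has_vector_derivative gd s x * (1 - F x)) (at x)"
      using HH_deriv[of s x] x assms by (simp add: has_real_derivative_iff_has_vector_derivative[symmetric])
  qed
  moreover have "HH s c - HH s s = psi s"
    unfolding HH_def using psi_ge[of c] assms by (simp add: D1_def power2_eq_square field_simps)
  ultimately have "((\<lambda>y. gd s y * (1 - F y)) has_integral psi s) {s..c}" by simp
  then show ?thesis
    by (intro nn_integral_has_integral_lebesgue') (use assms gd_nonneg F_range in \<open>auto intro!: mult_nonneg_nonneg\<close>)
qed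

end

context G begin

lemma rho_sf: "sigma_finite_measure rho"
proof -
  interpret prob_space rho by (rule prob_rho)
  show ?thesis by unfold_locales
qed

lemma main_integral_pos: assumes s: "0 < s" "s < c"
  shows "(\<integral>\<^sup>+ r. ennreal (gg s r) \<partial>rho) = ennreal (psi s)"
proof -
  interpret rs: sigma_finite_measure rho by (rule rho_sf)
  interpret ps: pair_sigma_finite lborel rho
    by (intro pair_sigma_finite.intro lborel.sigma_finite_measure_axioms rho_sf)
  define f where "f x r = (if s \<le> x \<and> x < r then ennreal (gd s x) else 0)" for x r
  have fm: "case_prod f \<in> borel_measurable (lborel \<Otimes>\<^sub>M rho)"
    unfolding f_def gd_def by measurable
  have "(\<integral>\<^sup>+ r. ennreal (gg s r) \<partial>rho) = (\<integral>\<^sup>+ r. (\<integral>\<^sup>+ x. f x r \<partial>lborel) \<partial>rho)"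
    using gg_integral[OF s(1)]
    by (intro nn_integral_cong) (auto simp: f_def intro!: nn_integral_cong split: split_indicator)
  also have "\<dots> = (\<integral>\<^sup>+ x. (\<integral>\<^sup>+ r. f x r \<partial>rho) \<partial>lborel)"
    by (rule ps.Fubini'[OF fm])
  also have "\<dots> = (\<integral>\<^sup>+ x. ennreal (gd s x * (1 - F x)) * indicator {s..c} x \<partial>lborel)"
  proof (intro nn_integral_cong)
    fix x :: real
    show "(\<integral>\<^sup>+ r. f x r \<partial>rho) = ennreal (gd s x * (1 - F x)) * indicator {s..c} x"
    proof (cases "s \<le> x")
      case False
      then show ?thesis unfolding f_def by simp
    next
      case True
      have "(\<integral>\<^sup>+ r. f x r \<partial>rho) = (\<integral>\<^sup>+ r. ennreal (gd s x) * indicator {x<..} r \<partial>rho)"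
        unfolding f_def using True by (intro nn_integral_cong) (auto split: split_indicator)
      also have "\<dots> = ennreal (gd s x) * emeasure rho {x<..}"
        by (rule nn_integral_cmult_indicator) simp
      also have "\<dots> = ennreal (gd s x * (1 - F x)) * indicator {s..c} x"
      proof (cases "x \<le> c")
        case True2: True
        have "emeasure rho {x<..} = ennreal (1 - F x)" using rho_gt[of x] True True2 s by simp
        then show ?thesis using True True2 gd_nonneg[of s x] s
          by (simp add: ennreal_mult')
      next
        case False
        then show ?thesis using rho_gt_ge_c[of x] by simp
      qed
      finally show ?thesis .
    qed
  qed
  also have "\<dots> = ennreal (psi s)" by (rule HH_integral[OF s])
  finally show ?thesis .
qed

lemma AE_rho_pos: "AE r in rho. 0 < r"
proof -
  have "{..0} \<in> null_sets rho" using rho_le0 by (simp add: null_sets_def)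
  then show ?thesis by (rule AE_not_in[THEN eventually_mono]) auto
qed

lemma AE_rho_le_c: "AE r in rho. r \<le> c"
proof -
  have "{c<..} \<in> null_sets rho" using rho_gtc by (simp add: null_sets_def)
  then show ?thesis by (rule AE_not_in[THEN eventually_mono]) auto
qed

lemma main_integral: assumes s: "0 \<le> s"
  shows "(\<integral>\<^sup>+ r. ennreal (gg s r) \<partial>rho) = ennreal (psi s)"
proof -
  consider "s = 0" | "0 < s" "s < c" | "c \<le> s" using s by linarith
  then show ?thesis
  proof cases
    case 1
    have "(\<integral>\<^sup>+ r. ennreal (gg s r) \<partial>rho) = (\<integral>\<^sup>+ r. 1 \<partial>rho)"
      using AE_rho_pos by (intro nn_integral_cong_AE) (auto simp: gg_def 1 elim!: eventually_mono)
    also have "\<dots> = 1" using prob_space.emeasure_space_1[OF prob_rho] by simp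
    finally show ?thesis using 1 psi_0 by simp
  next
    case 2
    then show ?thesis by (rule main_integral_pos)
  next
    case 3
    have "(\<integral>\<^sup>+ r. ennreal (gg s r) \<partial>rho) = (\<integral>\<^sup>+ r. 0 \<partial>rho)"
      using AE_rho_le_c 3 c_pos by (intro nn_integral_cong_AE) (auto simp: gg_def elim!: eventually_mono)
    then show ?thesis using psi_ge[OF 3] by simp
  qed
qed

end


lemma pair_set_meas:
  assumes "Measurable.pred (lborel \<Otimes>\<^sub>M lborel) (\<lambda>x::real \<times> real. P (fst x) (snd x))"
  shows "{(a, b). P a b} \<in> sets (lborel \<Otimes>\<^sub>M (lborel :: real measure))"
proof -
  have "{(a, b). P a b} = {x \<in> space (lborel \<Otimes>\<^sub>M lborel). P (fst x) (snd x)}"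
    by (auto simp: space_pair_measure)
  then show ?thesis using assms by (simp add: pred_def)
qed

lemma tri_area:
  fixes p q m :: real
  shows "emeasure (lborel \<Otimes>\<^sub>M lborel) {(a, b). p \<le> a \<and> q \<le> b \<and> a + b \<le> m}
    = ennreal (if p + q \<le> m then (m - p - q)^2 / 2 else 0)"
proof -
  have meas: "{(a, b). p \<le> a \<and> q \<le> b \<and> a + b \<le> m} \<in> sets (lborel \<Otimes>\<^sub>M (lborel :: real measure))"
    by (rule pair_set_meas) measurable
  have "emeasure (lborel \<Otimes>\<^sub>M lborel) {(a, b). p \<le> a \<and> q \<le> b \<and> a + b \<le> m}
     = (\<integral>\<^sup>+ a. emeasure lborel (Pair a -` {(a, b). p \<le> a \<and> q \<le> b \<and> a + b \<le> m}) \<partial>lborel)"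
    by (rule lborel.emeasure_pair_measure_alt[OF meas])
  also have "\<dots> = (\<integral>\<^sup>+ a. ennreal (m - q - a) * indicator {p..m - q} a \<partial>lborel)"
  proof (intro nn_integral_cong)
    fix a :: real
    have e: "Pair a -` {(a, b). p \<le> a \<and> q \<le> b \<and> a + b \<le> m} = (if p \<le> a then {q..m - a} else {})"
      by auto
    show "emeasure lborel (Pair a -` {(a, b). p \<le> a \<and> q \<le> b \<and> a + b \<le> m})
        = ennreal (m - q - a) * indicator {p..m - q} a"
      unfolding e by (auto simp: indicator_def)
  qed
  also have "\<dots> = ennreal (if p + q \<le> m then (m - p - q)^2 / 2 else 0)"
  proof (cases "p + q \<le> m")
    case True
    have "((\<lambda>a. m - q - a) has_integral ((- ((m - q - (m - q))^2 / 2)) - (- ((m - q - p)^2 / 2)))) {p..m - q}"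
    proof (rule fundamental_theorem_of_calculus)
      show "p \<le> m - q" using True by simp
      fix x assume "x \<in> {p..m - q}"
      have "((\<lambda>a. - ((m - q - a)^2 / 2)) has_real_derivative (m - q - x)) (at x)"
        by (auto intro!: derivative_eq_intros simp: power2_eq_square field_simps)
      then show "((\<lambda>a. - ((m - q - a)^2 / 2)) has_vector_derivative (m - q - x)) (at x within {p..m - q})"
        by (simp add: has_real_derivative_iff_has_vector_derivative[symmetric] has_field_derivative_at_within)
    qed
    then have "((\<lambda>a. m - q - a) has_integral (m - p - q)^2 / 2) {p..m - q}"
      by (simp add: algebra_simps)
    then have "(\<integral>\<^sup>+ a. ennreal (m - q - a) * indicator {p..m - q} a \<partial>lborel) = ennreal ((m - p - q)^2 / 2)"
      by (intro nn_integral_has_integral_lebesgue') auto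
    then show ?thesis using True by simp
  next
    case False
    then have "{p..m - q} = {}" by auto
    then show ?thesis using False by simp
  qed
  finally show ?thesis .
qed

definition Tset :: "(real \<times> real) set" where "Tset = {(a, b). 0 \<le> a \<and> 0 \<le> b \<and> a + b \<le> 1}"

definition Tri :: "(real \<times> real) measure" where
  "Tri = density (lborel \<Otimes>\<^sub>M lborel) (\<lambda>x. (2::ennreal) * indicator Tset x)"

lemma sets_Tri[simp, measurable_cong]: "sets Tri = sets (lborel \<Otimes>\<^sub>M lborel)"
  unfolding Tri_def by simp

lemma Tset_meas[measurable]: "Tset \<in> sets (lborel \<Otimes>\<^sub>M lborel)"
  unfolding Tset_def by (rule pair_set_meas) measurable

lemma emeasure_Tri: assumes "A \<in> sets (lborel \<Otimes>\<^sub>M lborel)"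
  shows "emeasure Tri A = 2 * emeasure (lborel \<Otimes>\<^sub>M lborel) (Tset \<inter> A)"
proof -
  have "emeasure Tri A = (\<integral>\<^sup>+ x. (2::ennreal) * indicator Tset x * indicator A x \<partial>(lborel \<Otimes>\<^sub>M lborel))"
    unfolding Tri_def using assms by (subst emeasure_density) auto
  also have "\<dots> = (\<integral>\<^sup>+ x. (2::ennreal) * indicator (Tset \<inter> A) x \<partial>(lborel \<Otimes>\<^sub>M lborel))"
    by (intro nn_integral_cong) (auto split: split_indicator)
  also have "\<dots> = 2 * emeasure (lborel \<Otimes>\<^sub>M lborel) (Tset \<inter> A)"
  proof -
    have "Tset \<inter> A \<in> sets (lborel \<Otimes>\<^sub>M lborel)" by (rule sets.Int[OF Tset_meas assms])
    then show ?thesis by (rule nn_integral_cmult_indicator)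
  qed
  finally show ?thesis .
qed

lemma prob_Tri: "prob_space Tri"
proof
  have "Tset \<inter> space Tri = {(a, b). 0 \<le> a \<and> 0 \<le> b \<and> a + b \<le> 1}"
    unfolding Tset_def Tri_def by (auto simp: space_pair_measure)
  moreover have "space Tri = space (lborel \<Otimes>\<^sub>M lborel)" unfolding Tri_def by simp
  ultimately have "emeasure Tri (space Tri) = 2 * ennreal (1 / 2)"
    using emeasure_Tri[OF sets.top[of "lborel \<Otimes>\<^sub>M lborel"]] tri_area[of 0 0 1] by simp
  also have "(2::ennreal) * ennreal (1 / 2) = ennreal (2 * (1 / 2))"
    by (subst ennreal_mult') auto
  finally show "emeasure Tri (space Tri) = 1" by simp
qed

lemma Tri_slice:
  fixes r t1 t2 t3 :: real
  assumes r: "0 < r" and t: "0 \<le> t1" "0 \<le> t2" "0 \<le> t3"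
  shows "emeasure Tri {(a, b). t1 \<le> r * max 0 a \<and> t2 \<le> r * max 0 b \<and> t3 \<le> r * max 0 (1 - a - b)}
     = ennreal (if t1 + t2 + t3 \<le> r then (1 - (t1 + t2 + t3) / r)^2 else 0)"
proof -
  let ?A = "{(a, b). t1 \<le> r * max 0 a \<and> t2 \<le> r * max 0 b \<and> t3 \<le> r * max 0 (1 - a - b)}"
  have meas: "?A \<in> sets (lborel \<Otimes>\<^sub>M lborel)" by (rule pair_set_meas) measurable
  have eq: "Tset \<inter> ?A = {(a, b). t1 / r \<le> a \<and> t2 / r \<le> b \<and> a + b \<le> 1 - t3 / r}"
  proof (rule set_eqI)
    fix x :: "real \<times> real"
    obtain a b where x: "x = (a, b)" by (cases x)
    have "(a, b) \<in> Tset \<inter> ?A \<longleftrightarrow> (t1 / r \<le> a \<and> t2 / r \<le> b \<and> a + b \<le> 1 - t3 / r)"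
    proof
      assume "(a, b) \<in> Tset \<inter> ?A"
      then have "0 \<le> a" "0 \<le> b" "a + b \<le> 1" "t1 \<le> r * a" "t2 \<le> r * b" "t3 \<le> r * (1 - a - b)"
        unfolding Tset_def by auto
      then have "t1 / r \<le> a" "t2 / r \<le> b" "t3 / r \<le> 1 - a - b"
        using r by (simp_all add: pos_divide_le_eq mult.commute)
      then show "t1 / r \<le> a \<and> t2 / r \<le> b \<and> a + b \<le> 1 - t3 / r" by linarith
    next
      assume h: "t1 / r \<le> a \<and> t2 / r \<le> b \<and> a + b \<le> 1 - t3 / r"
      have "0 \<le> t1 / r" "0 \<le> t2 / r" "0 \<le> t3 / r" using t r by auto
      then have ab: "0 \<le> a" "0 \<le> b" "a + b \<le> 1" "0 \<le> 1 - a - b" using h by auto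
      have "t3 / r \<le> 1 - a - b" using h by linarith
      then have "t1 \<le> r * a" "t2 \<le> r * b" "t3 \<le> r * (1 - a - b)"
        using h r by (simp_all add: pos_divide_le_eq mult.commute)
      then show "(a, b) \<in> Tset \<inter> ?A" using ab unfolding Tset_def by auto
    qed
    then show "x \<in> Tset \<inter> ?A \<longleftrightarrow> x \<in> {(a, b). t1 / r \<le> a \<and> t2 / r \<le> b \<and> a + b \<le> 1 - t3 / r}"
      using x by simp
  qed
  have "emeasure Tri ?A = 2 * ennreal (if t1 / r + t2 / r \<le> 1 - t3 / r then (1 - t3 / r - t1 / r - t2 / r)^2 / 2 else 0)"
    unfolding emeasure_Tri[OF meas] eq tri_area ..
  also have "\<dots> = ennreal (if t1 + t2 + t3 \<le> r then (1 - (t1 + t2 + t3) / r)^2 else 0)"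
  proof -
    have e0: "t1 / r + t2 / r + t3 / r = (t1 + t2 + t3) / r" by (simp add: add_divide_distrib)
    have e00: "(t1 + t2 + t3) / r \<le> 1 \<longleftrightarrow> t1 + t2 + t3 \<le> r" using r by (simp add: pos_divide_le_eq)
    have e1: "(t1 / r + t2 / r \<le> 1 - t3 / r) = (t1 + t2 + t3 \<le> r)"
      using e0 e00 by linarith
    have e2: "1 - t3 / r - t1 / r - t2 / r = 1 - (t1 + t2 + t3) / r"
      using e0 by linarith
    have "(2::ennreal) * ennreal ((1 - (t1 + t2 + t3) / r)^2 / 2) = ennreal (2 * ((1 - (t1 + t2 + t3) / r)^2 / 2))"
      by (subst ennreal_mult') auto
    then show ?thesis unfolding e1 e2 by simp
  qed
  finally show ?thesis .
qed


context G begin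

lemma psi0_range: "psi0 x \<in> {0..1}"
  unfolding psi0_def using psi_range by simp

lemma psi0_le_iff: "u \<in> {0..1} \<Longrightarrow> psi0 x \<le> u \<longleftrightarrow> phi lam u \<le> max 0 x"
  unfolding psi0_def by (rule psi_le_iff) auto

definition Umap :: "real \<times> (real \<times> real) \<Rightarrow> real \<times> real \<times> real" where
  "Umap x = (psi0 (max 0 (fst x) * max 0 (fst (snd x))), psi0 (max 0 (fst x) * max 0 (snd (snd x))),
             psi0 (max 0 (fst x) * max 0 (1 - fst (snd x) - snd (snd x))))"

definition Omega :: "(real \<times> (real \<times> real)) measure" where "Omega = rho \<Otimes>\<^sub>M Tri"

definition MM :: "(real \<times> real \<times> real) measure" where "MM = distr Omega borel Umap"

lemma space_Omega[simp]: "space Omega = UNIV"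
  unfolding Omega_def Tri_def by (simp add: space_pair_measure)

lemma Umap_meas: "Umap \<in> Omega \<rightarrow>\<^sub>M borel"
proof -
  have f: "(\<lambda>x::real \<times> (real \<times> real). fst x) \<in> borel_measurable Omega"
    unfolding Omega_def by (rule measurable_fst'', rule measurable_ident_sets, simp)
  have s1: "(\<lambda>x::real \<times> (real \<times> real). fst (snd x)) \<in> borel_measurable Omega"
  proof -
    have "snd \<in> Omega \<rightarrow>\<^sub>M (lborel \<Otimes>\<^sub>M lborel)"
      unfolding Omega_def by (rule measurable_snd'', rule measurable_ident_sets, simp)
    moreover have "fst \<in> (lborel \<Otimes>\<^sub>M lborel) \<rightarrow>\<^sub>M (borel :: real measure)"
      by (rule measurable_fst'', rule measurable_ident_sets, simp)
    ultimately show ?thesis by (rule measurable_compose)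
  qed
  have s2: "(\<lambda>x::real \<times> (real \<times> real). snd (snd x)) \<in> borel_measurable Omega"
  proof -
    have "snd \<in> Omega \<rightarrow>\<^sub>M (lborel \<Otimes>\<^sub>M lborel)"
      unfolding Omega_def by (rule measurable_snd'', rule measurable_ident_sets, simp)
    moreover have "snd \<in> (lborel \<Otimes>\<^sub>M lborel) \<rightarrow>\<^sub>M (borel :: real measure)"
      by (rule measurable_snd'', rule measurable_ident_sets, simp)
    ultimately show ?thesis by (rule measurable_compose)
  qed
  note psi0_meas[measurable] f[measurable] s1[measurable] s2[measurable]
  show ?thesis unfolding Umap_def by measurable
qed

lemma prob_Omega: "prob_space Omega"
  unfolding Omega_def by (rule prob_space_pair[OF prob_rho prob_Tri])

lemma prob_MM: "prob_space MM"
  unfolding MM_def by (rule prob_space.prob_space_distr[OF prob_Omega Umap_meas])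

lemma sets_MM: "sets MM = sets borel"
  unfolding MM_def by simp

lemma box_borel:
  fixes A B C :: "real set"
  assumes "A \<in> sets borel" "B \<in> sets borel" "C \<in> sets borel"
  shows "A \<times> B \<times> C \<in> sets (borel :: (real \<times> real \<times> real) measure)"
  unfolding borel_prod[symmetric] using assms by (intro pair_measureI) auto

lemma box_emeasure:
  assumes u: "u1 \<in> {0..1}" "u2 \<in> {0..1}" "u3 \<in> {0..1}"
  shows "emeasure MM ({..u1} \<times> {..u2} \<times> {..u3}) = ennreal (psi (phi lam u1 + phi lam u2 + phi lam u3))"
proof -
  interpret T: prob_space Tri by (rule prob_Tri)
  define t1 where "t1 = phi lam u1"
  define t2 where "t2 = phi lam u2"
  define t3 where "t3 = phi lam u3"
  have t: "0 \<le> t1" "0 \<le> t2" "0 \<le> t3" using phi_range u unfolding t1_def t2_def t3_def by auto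
  define E where "E = Umap -` ({..u1} \<times> {..u2} \<times> {..u3}) \<inter> space Omega"
  have Em0: "E \<in> sets Omega"
    unfolding E_def by (rule measurable_sets[OF Umap_meas]) (intro box_borel atMost_borel)
  then have Em: "E \<in> sets (rho \<Otimes>\<^sub>M Tri)" unfolding Omega_def .
  have "emeasure MM ({..u1} \<times> {..u2} \<times> {..u3}) = emeasure Omega E"
  proof -
    have bb: "{..u1} \<times> {..u2} \<times> {..u3} \<in> sets borel" by (intro box_borel atMost_borel)
    show ?thesis unfolding MM_def E_def by (rule emeasure_distr[OF Umap_meas bb])
  qed
  also have "\<dots> = (\<integral>\<^sup>+ r. emeasure Tri (Pair r -` E) \<partial>rho)"
    unfolding Omega_def by (rule T.emeasure_pair_measure_alt[OF Em])
  also have "\<dots> = (\<integral>\<^sup>+ r. ennreal (gg (t1 + t2 + t3) r) \<partial>rho)"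
  proof (rule nn_integral_cong_AE)
    show "AE r in rho. emeasure Tri (Pair r -` E) = ennreal (gg (t1 + t2 + t3) r)"
      using AE_rho_pos
    proof eventually_elim
      case (elim r)
      have key: "psi0 x \<le> u \<longleftrightarrow> phi lam u \<le> x" if "u \<in> {0..1}" "0 \<le> x" for x u
        using psi0_le_iff[OF that(1), of x] that(2) by simp
      have nn: "0 \<le> r * max 0 a" for a using elim by simp
      have eqv: "(Umap (r, (a, b)) \<in> {..u1} \<times> {..u2} \<times> {..u3}) \<longleftrightarrow>
          (t1 \<le> r * max 0 a \<and> t2 \<le> r * max 0 b \<and> t3 \<le> r * max 0 (1 - a - b))" for a b
      proof -
        have "Umap (r, (a, b)) = (psi0 (r * max 0 a), psi0 (r * max 0 b), psi0 (r * max 0 (1 - a - b)))"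
          unfolding Umap_def using elim by simp
        then show ?thesis
          using key[OF u(1) nn[of a]] key[OF u(2) nn[of b]] key[OF u(3) nn[of "1 - a - b"]]
          unfolding t1_def t2_def t3_def by simp
      qed
      have "Pair r -` E = {(a, b). t1 \<le> r * max 0 a \<and> t2 \<le> r * max 0 b \<and> t3 \<le> r * max 0 (1 - a - b)}"
      proof (rule set_eqI)
        fix p :: "real \<times> real"
        obtain a b where p: "p = (a, b)" by (cases p)
        show "p \<in> Pair r -` E \<longleftrightarrow> p \<in> {(a, b). t1 \<le> r * max 0 a \<and> t2 \<le> r * max 0 b \<and> t3 \<le> r * max 0 (1 - a - b)}"
          unfolding p E_def using eqv[of a b] by simp
      qed
      then show ?case using Tri_slice[OF elim t] by (simp add: gg_def)
    qed
  qed
  also have "\<dots> = ennreal (psi (t1 + t2 + t3))" using t by (intro main_integral) simp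
  finally show ?thesis unfolding t1_def t2_def t3_def .
qed

lemma box_measure:
  assumes u: "u1 \<in> {0..1}" "u2 \<in> {0..1}" "u3 \<in> {0..1}"
  shows "measure MM ({..u1} \<times> {..u2} \<times> {..u3}) = psi (phi lam u1 + phi lam u2 + phi lam u3)"
proof -
  have "0 \<le> phi lam u1" "0 \<le> phi lam u2" "0 \<le> phi lam u3"
    using phi_range u by auto
  then have "0 \<le> phi lam u1 + phi lam u2 + phi lam u3" by simp
  then have "0 \<le> psi (phi lam u1 + phi lam u2 + phi lam u3)"
    using psi_range by simp
  then show ?thesis using box_emeasure[OF u] by (simp add: measure_def)
qed

lemma preimage_eq:
  "Umap -` A \<inter> space Omega = Umap -` (A \<inter> ({..1} \<times> {..1} \<times> {..1})) \<inter> space Omega"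
proof -
  have "Umap x \<in> {..1} \<times> {..1} \<times> {..1}" for x
  proof -
    have "psi0 y \<le> 1" for y using psi0_range[of y] by simp
    then show ?thesis unfolding Umap_def by simp
  qed
  then have "Umap -` ({..1} \<times> {..1} \<times> {..1}) = UNIV" by auto
  then show ?thesis by (simp only: vimage_Int Int_UNIV_right)
qed

lemma measure_MM_inter: assumes "A \<in> sets borel"
  shows "measure MM A = measure MM (A \<inter> ({..1} \<times> {..1} \<times> {..1}))"
proof -
  have "measure MM A = measure Omega (Umap -` A \<inter> space Omega)"
    unfolding MM_def using assms by (rule measure_distr[OF Umap_meas])
  also have "\<dots> = measure Omega (Umap -` (A \<inter> ({..1} \<times> {..1} \<times> {..1})) \<inter> space Omega)"
    by (rule arg_cong[where f="measure Omega", OF preimage_eq])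
  also have "\<dots> = measure MM (A \<inter> ({..1} \<times> {..1} \<times> {..1}))"
  proof -
    have "A \<inter> ({..1} \<times> {..1} \<times> {..1}) \<in> sets borel" by (intro sets.Int assms box_borel atMost_borel)
    then show ?thesis unfolding MM_def by (rule measure_distr[OF Umap_meas, symmetric])
  qed
  finally show ?thesis .
qed

lemma copula: "copula3 (\<lambda>u1 u2 u3. phi_pinv lam (phi lam u1 + phi lam u2 + phi lam u3))"
  unfolding copula3_def
proof (intro exI[of _ MM] conjI ballI)
  show "prob_space MM" by (rule prob_MM)
  show "sets MM = sets borel" by (rule sets_MM)
  fix u1 u2 u3 :: real assume u: "u1 \<in> {0..1}" "u2 \<in> {0..1}" "u3 \<in> {0..1}"
  show "phi_pinv lam (phi lam u1 + phi lam u2 + phi lam u3) = measure MM ({..u1} \<times> {..u2} \<times> {..u3})"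
    using box_measure[OF u] unfolding psi_def by simp
next
  fix t :: real assume t: "t \<in> {0..1}"
  have one: "(1::real) \<in> {0..1}" by simp
  have "measure MM ({..t} \<times> UNIV \<times> UNIV) = measure MM (({..t} \<times> UNIV \<times> UNIV) \<inter> ({..1} \<times> {..1} \<times> {..1}))"
    by (rule measure_MM_inter) (intro box_borel atMost_borel; simp)
  also have "({..t} \<times> UNIV \<times> UNIV) \<inter> ({..1} \<times> {..1} \<times> {..1}) = {..t} \<times> {..1} \<times> {..1}" using t by (simp add: Times_Int_Times)
  also have "measure MM ({..t} \<times> {..1} \<times> {..1}) = t" using box_measure[OF t one one] phi1 psi_phi[OF t] by simp
  finally show "measure MM ({..t} \<times> UNIV \<times> UNIV) = t" .
next
  fix t :: real assume t: "t \<in> {0..1}"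
  have one: "(1::real) \<in> {0..1}" by simp
  have "measure MM (UNIV \<times> {..t} \<times> UNIV) = measure MM ((UNIV \<times> {..t} \<times> UNIV) \<inter> ({..1} \<times> {..1} \<times> {..1}))"
    by (rule measure_MM_inter) (intro box_borel atMost_borel; simp)
  also have "(UNIV \<times> {..t} \<times> UNIV) \<inter> ({..1} \<times> {..1} \<times> {..1}) = {..1} \<times> {..t} \<times> {..1}" using t by (simp add: Times_Int_Times)
  also have "measure MM ({..1} \<times> {..t} \<times> {..1}) = t" using box_measure[OF one t one] phi1 psi_phi[OF t] by simp
  finally show "measure MM (UNIV \<times> {..t} \<times> UNIV) = t" .
next
  fix t :: real assume t: "t \<in> {0..1}"
  have one: "(1::real) \<in> {0..1}" by simp
  have "measure MM (UNIV \<times> UNIV \<times> {..t}) = measure MM ((UNIV \<times> UNIV \<times> {..t}) \<inter> ({..1} \<times> {..1} \<times> {..1}))"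
    by (rule measure_MM_inter) (intro box_borel atMost_borel; simp)
  also have "(UNIV \<times> UNIV \<times> {..t}) \<inter> ({..1} \<times> {..1} \<times> {..1}) = {..1} \<times> {..1} \<times> {..t}" using t by (simp add: Times_Int_Times)
  also have "measure MM ({..1} \<times> {..1} \<times> {..t}) = t" using box_measure[OF one one t] phi1 psi_phi[OF t] by simp
  finally show "measure MM (UNIV \<times> UNIV \<times> {..t}) = t" .
qed

end

theorem theorem6:
  fixes lam :: real
  assumes "-1 < lam" and "lam \<le> -1/2"
  shows "copula3 (\<lambda>u1 u2 u3. phi_pinv lam (phi lam u1 + phi lam u2 + phi lam u3))"
  using G.copula[OF G.intro[OF assms]] .


end
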